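(* Fix $\epsilon\in[0,1/3)$ and $\zeta\in(0,1)$, and suppose the local identification assumption holds. Let $\hat\theta\in\Theta$ be the estimator returned by the numerical optimizer. Suppose there is an event $E$ of probability at least $1-\zeta$ on which: (i) for every $k\in[L]$ and every $\theta\in\mathcal B_0$, $$\Big\|\sum_{n=1}^N\hat w^{(k)}_n(\theta)\check g^{(k)}_n(\theta)-\mu^{(k)}_g(\theta)\Big\|_2\le\delta_{\mu,k}(\zeta)+\alpha_\epsilon\sqrt{C_k},\qquad\alpha_\epsilon=\sqrt{\tfrac{\epsilon}{1-2\epsilon}}$$ (as guaranteed, under high-probability inlier stability, by the SGR reweighting with $C_k=C_{stop,k}$ or $C_k=\sup_{\theta\in\mathcal B_0}\|\Sigma^{(k)}_g(\theta)\|_{op}+\delta_{\Sigma,k}(\zeta)+(\delta_{\mu,k}(\zeta)+R_k)^2+\delta_{T,k}$); and (ii) $\hat\theta\in\mathcal B_0$ and $\|\hat\Psi^{SGR}(\hat\theta)\|_2\le\delta_{opt}$. Then on $E$ (hence with probability at least $1-\zeta$), $$\|\hat\theta-\theta^\star\|_2\le\frac{2}{\lambda^\star}\Big(\sum_{k=1}^La_k\big(\delta_{\mu,k}(\zeta)+\alpha_\epsilon\sqrt{C_k}\big)+\delta_{opt}\Big).$$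
   Context: Let $\Theta\subseteq\mathbb R^p$, $\theta^\star\in\Theta$, $L\ge1$, population moment blocks $m_k:\Theta\to\mathbb R^{q_k}$, $m=(m_1,\dots,m_L):\Theta\to\mathbb R^q$, Jacobian $G(\theta)=\nabla_\theta m(\theta)\in\mathbb R^{q\times p}$, $W\in\mathbb R^{q\times q}$ symmetric PSD, and population GMM score $\Psi(\theta)=G(\theta)^\top Wm(\theta)$. Local identification assumption: there is $r_0>0$ with $\mathcal B_0=\{\theta:\|\theta-\theta^\star\|_2\le r_0\}\subseteq\Theta$ and (i) $m(\theta^\star)=0$; (ii) $m$ is $C^1$ on $\mathcal B_0$ with $\|G(\theta)-G(\theta')\|_{op}\le L_G\|\theta-\theta'\|_2$ on $\mathcal B_0$; (iii) $\lambda^\star=\lambda_{\min}((G^\star)^\top WG^\star)>0$ where $G^\star=G(\theta^\star)$; (iv) $\|W\|_{op}L_Gr_0(\frac32\|G^\star\|_{op}+\frac12L_Gr_0)\le\lambda^\star/2$. For each $k\in[L]$, $n\in[N]$ and $\theta$, $\check g^{(k)}_n(\theta)\in\mathbb R^p$ is the per-observation gradient of the order-$k$ moment-matching objective evaluated at the (possibly $\epsilon$-contaminated) $n$-th observation, with inlier population mean $\mu^{(k)}_g(\theta)\in\mathbb R^p$; $a_1,\dots,a_L\ge0$ are scalars with $\Psi(\theta)=\sum_{k=1}^La_k\mu^{(k)}_g(\theta)$ for $\theta\in\mathcal B_0$. The capped simplex is $\Delta_{N,\epsilon}=\{w\in\mathbb R^N:\sum_nw_n=1,0\le w_n\le\frac1{(1-\epsilon)N}\}$;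 $\hat w^{(k)}(\theta)\in\Delta_{N,\epsilon}$ are the reweighting weights computed on the cloud $\{\check g^{(k)}_n(\theta)\}_n$, and $\hat\Psi^{SGR}(\theta)=\sum_{k=1}^La_k\sum_{n=1}^N\hat w^{(k)}_n(\theta)\check g^{(k)}_n(\theta)$. The constants $\delta_{\mu,k}(\zeta),C_k,\delta_{opt}\ge0$ are given. *)

theory Defs
  imports "HOL-Analysis.Analysis" "HOL-Probability.Probability"
begin

text \<open>Smallest eigenvalue of a square real matrix (used for symmetric PSD matrices,
  whose eigenvalues are real).\<close>
definition lambda_min :: "real^'n^'n \<Rightarrow> real" where
  "lambda_min A = Min {c. \<exists>v::real^'n. v \<noteq> 0 \<and> A *v v = c *\<^sub>R v}"

definition opnorm :: "real^'n^'m \<Rightarrow> real" where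
  "opnorm A = onorm (\<lambda>x. A *v x)"

definition capped_simplex :: "nat \<Rightarrow> real \<Rightarrow> (nat \<Rightarrow> real) set" where
  "capped_simplex N eps = {w. (\<Sum>n=1..N. w n) = 1 \<and>
      (\<forall>n\<in>{1..N}. 0 \<le> w n \<and> w n \<le> 1 / ((1 - eps) * real N))}"

end

theory Submission
  imports Defs
begin


lemma dot_mv_sym: fixes A :: "real^'n^'n"
  assumes "transpose A = A" shows "x \<bullet> (A *v y) = (A *v x) \<bullet> y"
proof -
  have "x \<bullet> (A *v y) = (x v* A) \<bullet> y" by (simp add: dot_lmul_matrix)
  also have "x v* A = transpose A *v x"
    by (metis transpose_transpose vector_transpose_matrix)
  finally show ?thesis using assms by simp
qed

lemma eig_finite: fixes A :: "real^'n^'n"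
  assumes sym: "transpose A = A"
  shows "finite {c. \<exists>v::real^'n. v \<noteq> 0 \<and> A *v v = c *\<^sub>R v}"
proof -
  define S where "S = {c. \<exists>v::real^'n. v \<noteq> 0 \<and> A *v v = c *\<^sub>R v}"
  define ev where "ev c = (SOME v. v \<noteq> 0 \<and> A *v v = c *\<^sub>R v)" for c
  have ev: "ev c \<noteq> 0 \<and> A *v ev c = c *\<^sub>R ev c" if "c \<in> S" for c
    using that unfolding S_def ev_def by (metis (mono_tags, lifting) mem_Collect_eq someI_ex)
  have orth: "ev c \<bullet> ev d = 0" if "c \<in> S" "d \<in> S" "c \<noteq> d" for c d
  proof -
    have "ev c \<bullet> (A *v ev d) = (A *v ev c) \<bullet> ev d" by (rule dot_mv_sym[OF sym])
    hence "d * (ev c \<bullet> ev d) = c * (ev c \<bullet> ev d)" using ev[OF that(1)] ev[OF that(2)] by simp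
    with that(3) show ?thesis by simp
  qed
  have inj: "inj_on ev S"
  proof (rule inj_onI)
    fix c d assume cd: "c \<in> S" "d \<in> S" "ev c = ev d"
    show "c = d"
    proof (rule ccontr)
      assume "c \<noteq> d"
      hence "ev c \<bullet> ev c = 0" using orth[OF cd(1,2)] cd(3) by simp
      thus False using ev[OF cd(1)] by simp
    qed
  qed
  have "pairwise orthogonal (ev ` S)"
    unfolding pairwise_def orthogonal_def using orth by blast
  moreover have "0 \<notin> ev ` S" using ev by auto
  ultimately have "independent (ev ` S)" by (rule pairwise_orthogonal_independent)
  hence "finite (ev ` S)" by (rule independent_imp_finite)
  thus ?thesis using inj finite_imageD unfolding S_def by blast
qed

lemma lambda_min_le: fixes A :: "real^'n^'n"
  assumes sym: "transpose A = A"
  shows "lambda_min A * (x \<bullet> x) \<le> x \<bullet> (A *v x)"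
proof -
  define f where "f x = x \<bullet> (A *v x)" for x :: "real^'n"
  have fc: "continuous_on UNIV f" unfolding f_def
  proof -
    have "continuous_on UNIV ((*v) A)" by (rule linear_continuous_on[OF matrix_vector_mul_bounded_linear])
    thus "continuous_on UNIV (\<lambda>x. x \<bullet> (A *v x))" by (intro continuous_intros)
  qed
  have cpt: "compact (sphere (0::real^'n) 1)" by simp
  obtain i :: 'n where True by simp
  have ne: "sphere (0::real^'n) 1 \<noteq> {}" 
  proof -
    have "axis i (1::real) \<in> sphere 0 1" by simp
    thus ?thesis by blast
  qed
  obtain v where v: "v \<in> sphere 0 1" and vmin: "\<forall>y\<in>sphere 0 1. f v \<le> f y"
    using continuous_attains_inf[OF cpt ne continuous_on_subset[OF fc]] by blast
  define mu where "mu = f v"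
  have nv: "norm v = 1" using v by simp
  have vv: "v \<bullet> v = 1" using nv by (simp add: dot_square_norm)
  have all: "mu * (y \<bullet> y) \<le> f y" for y
  proof (cases "y = 0")
    case True thus ?thesis by (simp add: f_def)
  next
    case False
    define u where "u = y /\<^sub>R norm y"
    have "u \<in> sphere 0 1" using False by (simp add: u_def)
    hence "mu \<le> f u" using vmin mu_def by blast
    also have "f u = f y / (norm y)^2" unfolding f_def u_def
      by (simp add: matrix_vector_mult_scaleR power2_eq_square field_simps)
    finally have "mu * (norm y)^2 \<le> f y" using False by (simp add: field_simps)
    thus ?thesis by (simp add: dot_square_norm)
  qed
  have eig: "A *v v = mu *\<^sub>R v"
  proof -
    define w where "w = A *v v - mu *\<^sub>R v"
    define c where "c = w \<bullet> w"
    define d where "d = f w - mu * (w \<bullet> w)"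
    have d0: "d \<ge> 0" using all[of w] by (simp add: d_def)
    have q: "0 \<le> 2 * t * c + t^2 * d" for t
    proof -
      have h0: "mu * ((v + t *\<^sub>R w) \<bullet> (v + t *\<^sub>R w)) \<le> f (v + t *\<^sub>R w)" by (rule all)
      have e1: "f (v + t *\<^sub>R w) = mu + 2 * t * (w \<bullet> (A *v v)) + t^2 * f w"
        using dot_mv_sym[OF sym, of v w]
        by (simp add: f_def mu_def matrix_vector_right_distrib matrix_vector_mult_scaleR
            inner_add_left inner_add_right power2_eq_square inner_commute algebra_simps)
      have e2: "(v + t *\<^sub>R w) \<bullet> (v + t *\<^sub>R w) = 1 + 2 * t * (v \<bullet> w) + t^2 * (w \<bullet> w)"
        using vv by (simp add: inner_add_left inner_add_right power2_eq_square inner_commute algebra_simps)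
      have e3: "c = w \<bullet> (A *v v) - mu * (v \<bullet> w)"
        unfolding c_def by (simp add: w_def inner_diff_left inner_diff_right inner_commute algebra_simps)
      have h1: "mu * (1 + 2 * t * (v \<bullet> w) + t^2 * (w \<bullet> w)) \<le> mu + 2 * t * (w \<bullet> (A *v v)) + t^2 * f w"
        using h0 unfolding e1 e2 .
      have e4: "(mu + 2 * t * (w \<bullet> (A *v v)) + t^2 * f w) - mu * (1 + 2 * t * (v \<bullet> w) + t^2 * (w \<bullet> w))
          = 2 * t * c + t^2 * d"
        unfolding e3 d_def by (simp add: algebra_simps)
      show ?thesis using h1 e4 by linarith
    qed
    have "c = 0"
    proof -
      define t where "t = - c / (d + 1)"
      have dp: "d + 1 \<noteq> 0" using d0 by simp
      have "(2 * t * c + t^2 * d) * (d+1)^2 = - (c^2 * (d + 2))"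
      proof -
        have td: "t * (d + 1) = - c" unfolding t_def using dp by simp
        have "(2 * t * c + t^2 * d) * (d+1)^2 = 2 * c * (t * (d+1)) * (d+1) + (t * (d+1))^2 * d"
          by (simp add: algebra_simps power2_eq_square)
        also have "\<dots> = - (c^2 * (d + 2))" unfolding td by (simp add: algebra_simps power2_eq_square)
        finally show ?thesis .
      qed
      moreover have "0 \<le> (2 * t * c + t^2 * d) * (d+1)^2" using q[of t] by simp
      ultimately have "0 \<le> - (c^2 * (d + 2))" by simp
      hence "c^2 * (d + 2) \<le> 0" by simp
      hence "c^2 \<le> 0" using d0 by (smt (verit) mult_pos_pos zero_less_power2)
      thus ?thesis by simp
    qed
    thus ?thesis by (simp add: c_def w_def)
  qed
  have "v \<noteq> 0" using nv by auto
  hence "mu \<in> {c. \<exists>v::real^'n. v \<noteq> 0 \<and> A *v v = c *\<^sub>R v}" using eig by blast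
  hence "lambda_min A \<le> mu" unfolding lambda_min_def using eig_finite[OF sym] by (rule Min_le[rotated])
  hence "lambda_min A * (x \<bullet> x) \<le> mu * (x \<bullet> x)" by (simp add: mult_right_mono)
  also have "\<dots> \<le> f x" by (rule all)
  finally show ?thesis by (simp add: f_def)
qed



lemma opnorm_bound: fixes A :: "real^'n^'m"
  shows "norm (A *v x) \<le> opnorm A * norm x"
  unfolding opnorm_def by (rule onorm[OF matrix_vector_mul_bounded_linear])

lemma opnorm_nonneg: fixes A :: "real^'n^'m"
  shows "0 \<le> opnorm A"
  unfolding opnorm_def by (rule onorm_pos_le[OF matrix_vector_mul_bounded_linear])

lemma taylor_bound:
  fixes m :: "real^'p \<Rightarrow> real^'q" and G :: "real^'p \<Rightarrow> real^'p^'q"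
  assumes m_deriv: "\<forall>\<theta>\<in>cball ts r0. (m has_derivative (\<lambda>h. G \<theta> *v h)) (at \<theta> within cball ts r0)"
    and G_lip: "\<forall>\<theta>\<in>cball ts r0. \<forall>\<theta>'\<in>cball ts r0. opnorm (G \<theta> - G \<theta>') \<le> LG * norm (\<theta> - \<theta>')"
    and th: "th \<in> cball ts r0" and m0: "m ts = 0" and r0: "r0 > 0"
  shows "norm (m th - G ts *v (th - ts)) \<le> LG / 2 * (norm (th - ts))^2"
proof -
  define h where "h = th - ts"
  define B where "B = cball ts r0"
  have nh: "norm h \<le> r0" using th by (simp add: h_def dist_norm norm_minus_commute)
  have tsB: "ts \<in> B" using nh B_def norm_ge_zero[of h] by (simp del: norm_ge_zero)
  define l where "l t = ts + t *\<^sub>R h" for t :: real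
  have lB: "l t \<in> B" if "0 \<le> t" "t \<le> 1" for t
  proof -
    have "norm (t *\<^sub>R h) \<le> 1 * r0" using that nh mult_mono[of t 1 "norm h" r0] by (simp add: abs_of_nonneg)
    thus ?thesis by (simp add: B_def l_def dist_norm)
  qed
  define f where "f t = m (l t) - t *\<^sub>R (G ts *v h)" for t
  define phi where "phi t = LG * (norm h)^2 * t^2 / 2" for t :: real
  have mc: "continuous_on B m"
    using m_deriv unfolding B_def[symmetric]
    by (meson continuous_on_eq_continuous_within has_derivative_continuous)
  have lc: "continuous_on {0..1} l" unfolding l_def by (intro continuous_intros)
  have fc: "continuous_on {0..1} f" unfolding f_def
    by (intro continuous_intros continuous_on_compose2[OF mc lc]) (use lB in auto)
  have phic: "continuous_on {0..1} phi" unfolding phi_def by (intro continuous_intros) auto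
  have fd: "(f has_vector_derivative (G (l t) *v h - G ts *v h)) (at t)" if "0 < t" "t < 1" for t
  proof -
    have int: "l t \<in> interior B"
    proof (cases "h = 0")
      case True thus ?thesis using r0 by (simp add: l_def B_def)
    next
      case False
      have "norm (t *\<^sub>R h) = t * norm h" using that by simp
      also have "\<dots> \<le> t * r0" using that nh by (simp add: mult_left_mono)
      also have "\<dots> < 1 * r0" using that r0 by (intro mult_strict_right_mono) auto
      finally have "norm (t *\<^sub>R h) < 1 * r0" .
      thus ?thesis by (simp add: B_def l_def dist_norm)
    qed
    have md: "(m has_derivative (\<lambda>k. G (l t) *v k)) (at (l t))"
      using m_deriv lB[of t] that int unfolding B_def[symmetric]
      by (metis at_within_interior less_imp_le)
    have ld: "(l has_derivative (\<lambda>s. s *\<^sub>R h)) (at t)" unfolding l_def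
      by (auto intro!: derivative_eq_intros)
    have "((\<lambda>t. m (l t)) has_derivative (\<lambda>s. G (l t) *v (s *\<^sub>R h))) (at t)"
      using has_derivative_compose[OF ld md] by (simp add: o_def)
    hence "(f has_derivative (\<lambda>s. G (l t) *v (s *\<^sub>R h) - s *\<^sub>R (G ts *v h))) (at t)"
      unfolding f_def by (auto intro!: derivative_eq_intros)
    thus ?thesis unfolding has_vector_derivative_def
      by (simp add: matrix_vector_mult_scaleR scaleR_diff_right)
  qed
  have phid: "(phi has_vector_derivative (LG * (norm h)^2 * t)) (at t)" for t
    unfolding phi_def has_vector_derivative_def
    by (auto intro!: derivative_eq_intros simp: power2_eq_square algebra_simps)
  have bnd: "norm (G (l t) *v h - G ts *v h) \<le> LG * (norm h)^2 * t" if "0 < t" "t < 1" for t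
  proof -
    have "norm (G (l t) *v h - G ts *v h) = norm ((G (l t) - G ts) *v h)"
      by (simp add: matrix_vector_mult_diff_rdistrib)
    also have "\<dots> \<le> opnorm (G (l t) - G ts) * norm h" by (rule opnorm_bound)
    also have "\<dots> \<le> (LG * norm (l t - ts)) * norm h"
    proof -
      have "l t \<in> B" using lB[of t] that by simp
      hence "opnorm (G (l t) - G ts) \<le> LG * norm (l t - ts)" using G_lip tsB unfolding B_def by blast
      thus ?thesis by (rule mult_right_mono) simp
    qed
    also have "\<dots> = LG * (norm h)^2 * t" using that by (simp add: l_def power2_eq_square)
    finally show ?thesis .
  qed
  have "norm (f 1 - f 0) \<le> phi 1 - phi 0"
    by (rule differentiable_bound_general[OF zero_less_one fc phic fd phid bnd])
  moreover have "l 1 = th" "l 0 = ts" unfolding l_def h_def by simp_all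
  hence "f 1 - f 0 = m th - G ts *v h" unfolding f_def using m0 by simp
  moreover have "phi 1 - phi 0 = LG / 2 * (norm h)^2" unfolding phi_def by simp
  ultimately show ?thesis unfolding h_def by simp
qed

theorem mainTheorem15:
  fixes Theta :: "(real^'p) set" and theta_star :: "real^'p"
    and L N :: nat and r0 LG eps zeta delta_opt :: real
    and m :: "real^'p \<Rightarrow> real^'q" and G :: "real^'p \<Rightarrow> real^'p^'q"
    and W :: "real^'q^'q"
    and a :: "nat \<Rightarrow> real" and C :: "nat \<Rightarrow> real" and delta_mu :: "nat \<Rightarrow> real \<Rightarrow> real"
    and mu_g :: "nat \<Rightarrow> real^'p \<Rightarrow> real^'p"
    and M :: "'w measure" and E :: "'w set"
    and g_chk :: "nat \<Rightarrow> nat \<Rightarrow> real^'p \<Rightarrow> 'w \<Rightarrow> real^'p"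
    and w_hat :: "nat \<Rightarrow> real^'p \<Rightarrow> 'w \<Rightarrow> nat \<Rightarrow> real"
    and theta_hat :: "'w \<Rightarrow> real^'p"
  defines "B0 \<equiv> cball theta_star r0"
    and "lam \<equiv> lambda_min (transpose (G theta_star) ** W ** G theta_star)"
    and "Psi \<equiv> (\<lambda>\<theta>. transpose (G \<theta>) *v (W *v m \<theta>))"
    and "alpha \<equiv> sqrt (eps / (1 - 2 * eps))"
    and "Psi_SGR \<equiv> (\<lambda>\<theta> \<omega>. \<Sum>k=1..L. a k *\<^sub>R (\<Sum>n=1..N. w_hat k \<theta> \<omega> n *\<^sub>R g_chk k n \<theta> \<omega>))"
  assumes eps: "0 \<le> eps" "eps < 1/3"
    and zeta: "0 < zeta" "zeta < 1"
    and L: "L \<ge> 1"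
    and theta_star: "theta_star \<in> Theta"
    and W_sym: "transpose W = W"
    and W_psd: "\<forall>x. 0 \<le> x \<bullet> (W *v x)"
    and r0: "r0 > 0" and B0_sub: "B0 \<subseteq> Theta"
    and m_zero: "m theta_star = 0"
    and m_deriv: "\<forall>\<theta>\<in>B0. (m has_derivative (\<lambda>h. G \<theta> *v h)) (at \<theta> within B0)"
    and G_cont: "continuous_on B0 G"
    and G_lip: "\<forall>\<theta>\<in>B0. \<forall>\<theta>'\<in>B0. opnorm (G \<theta> - G \<theta>') \<le> LG * norm (\<theta> - \<theta>')"
    and lam_pos: "lam > 0"
    and ident: "opnorm W * LG * r0 * (3/2 * opnorm (G theta_star) + 1/2 * LG * r0) \<le> lam / 2"
    and a_nonneg: "\<forall>k\<in>{1..L}. a k \<ge> 0"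
    and Psi_decomp: "\<forall>\<theta>\<in>B0. Psi \<theta> = (\<Sum>k=1..L. a k *\<^sub>R mu_g k \<theta>)"
    and w_simplex: "\<forall>k\<in>{1..L}. \<forall>\<theta> \<omega>. w_hat k \<theta> \<omega> \<in> capped_simplex N eps"
    and consts_nonneg: "\<forall>k\<in>{1..L}. delta_mu k zeta \<ge> 0 \<and> C k \<ge> 0" "delta_opt \<ge> 0"
    and M: "prob_space M"
    and E_ev: "E \<in> sets M"
    and E_prob: "measure M E \<ge> 1 - zeta"
    and E_i: "\<forall>\<omega>\<in>E. \<forall>k\<in>{1..L}. \<forall>\<theta>\<in>B0.
       norm ((\<Sum>n=1..N. w_hat k \<theta> \<omega> n *\<^sub>R g_chk k n \<theta> \<omega>) - mu_g k \<theta>)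
         \<le> delta_mu k zeta + alpha * sqrt (C k)"
    and E_ii: "\<forall>\<omega>\<in>E. theta_hat \<omega> \<in> Theta \<and> theta_hat \<omega> \<in> B0 \<and>
       norm (Psi_SGR (theta_hat \<omega>) \<omega>) \<le> delta_opt"
  shows "\<forall>\<omega>\<in>E. norm (theta_hat \<omega> - theta_star)
     \<le> 2 / lam * ((\<Sum>k=1..L. a k * (delta_mu k zeta + alpha * sqrt (C k))) + delta_opt)"
  proof
  fix \<omega> assume w: "\<omega> \<in> E"
  define th where "th = theta_hat \<omega>"
  define h where "h = th - theta_star"
  define Gs where "Gs = G theta_star"
  define nW where "nW = opnorm W"
  define g where "g = opnorm Gs"
  define n where "n = norm h"
  have thB: "th \<in> B0" using E_ii w th_def by blast
  have tsB: "theta_star \<in> B0" using r0 unfolding B0_def by simp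
  have nr0: "n \<le> r0" using thB unfolding B0_def n_def h_def by (simp add: dist_norm norm_minus_commute)
  have n0: "0 \<le> n" unfolding n_def by simp
  have nW0: "0 \<le> nW" unfolding nW_def by (rule opnorm_nonneg)
  have g0: "0 \<le> g" unfolding g_def by (rule opnorm_nonneg)
  have key: "lam / 2 * n \<le> norm (Psi th)"
  proof (cases "h = 0")
    case True thus ?thesis by (simp add: n_def)
  next
    case False
    hence npos: "0 < n" unfolding n_def by simp
    have LG0: "0 \<le> LG"
    proof -
      have "0 \<le> opnorm (G th - G theta_star)" by (rule opnorm_nonneg)
      also have "\<dots> \<le> LG * n" using G_lip thB tsB unfolding n_def h_def by blast
      finally show ?thesis using npos by (simp add: zero_le_mult_iff)
    qed
    define D where "D = G th - Gs"
    define us where "us = Gs *v h"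
    define r where "r = m th - us"
    define Dh where "Dh = D *v h"
    have rb: "norm r \<le> LG / 2 * n^2"
      unfolding r_def us_def Gs_def n_def h_def
      using taylor_bound[of theta_star r0 m G LG th] m_deriv G_lip thB m_zero r0 unfolding B0_def by blast
    have usb: "norm us \<le> g * n" unfolding us_def g_def n_def by (rule opnorm_bound)
    have Dhb: "norm Dh \<le> LG * n * n"
    proof -
      have "norm Dh \<le> opnorm D * n" unfolding Dh_def n_def by (rule opnorm_bound)
      also have "\<dots> \<le> LG * n * n" using G_lip thB tsB unfolding D_def Gs_def n_def h_def
        by (intro mult_right_mono) auto
      finally show ?thesis .
    qed
    have Wb: "norm (W *v z) \<le> nW * norm z" for z unfolding nW_def by (rule opnorm_bound)
    have cs: "\<bar>x \<bullet> (W *v z)\<bar> \<le> norm x * (nW * norm z)" for x z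
    proof -
      have "\<bar>x \<bullet> (W *v z)\<bar> \<le> norm x * norm (W *v z)" by (rule Cauchy_Schwarz_ineq2)
      also have "\<dots> \<le> norm x * (nW * norm z)" by (intro mult_left_mono Wb) simp
      finally show ?thesis .
    qed
    have tr: "x \<bullet> (transpose B *v y) = (B *v x) \<bullet> y" for x y and B :: "real^'p^'q"
    proof -
      have "transpose B *v y = y v* B" by (metis transpose_transpose vector_transpose_matrix)
      hence "x \<bullet> (transpose B *v y) = (y v* B) \<bullet> x" by (simp add: inner_commute)
      also have "\<dots> = y \<bullet> (B *v x)" by (rule dot_lmul_matrix)
      finally show ?thesis by (simp add: inner_commute)
    qed
    have hPsi: "h \<bullet> Psi th = (us + Dh) \<bullet> (W *v (us + r))"
    proof -
      have "h \<bullet> Psi th = (G th *v h) \<bullet> (W *v m th)" unfolding Psi_def by (rule tr)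
      moreover have "G th *v h = us + Dh" unfolding us_def Dh_def D_def
        by (simp add: matrix_vector_mult_diff_rdistrib)
      moreover have "m th = us + r" unfolding r_def by simp
      ultimately show ?thesis by simp
    qed
    have expand: "(us + Dh) \<bullet> (W *v (us + r)) = us \<bullet> (W *v us) + us \<bullet> (W *v r) + Dh \<bullet> (W *v us) + Dh \<bullet> (W *v r)"
      by (simp add: matrix_vector_right_distrib inner_add_left inner_add_right)
    define A where "A = transpose Gs ** W ** Gs"
    have Asym: "transpose A = A" unfolding A_def
      by (simp add: matrix_transpose_mul W_sym matrix_mul_assoc)
    have quad: "us \<bullet> (W *v us) = h \<bullet> (A *v h)"
    proof -
      have "A *v h = transpose Gs *v (W *v (Gs *v h))" unfolding A_def
        by (simp add: matrix_vector_mul_assoc matrix_mul_assoc)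
      thus ?thesis unfolding us_def by (simp only: tr)
    qed
    have lamq: "lam * n^2 \<le> us \<bullet> (W *v us)"
      using lambda_min_le[OF Asym, of h] unfolding quad lam_def A_def Gs_def n_def
      by (simp add: dot_square_norm)
    have t1: "\<bar>us \<bullet> (W *v r)\<bar> \<le> g * n * (nW * (LG / 2 * n^2))"
    proof -
      have "\<bar>us \<bullet> (W *v r)\<bar> \<le> norm us * (nW * norm r)" by (rule cs)
      also have "\<dots> \<le> g * n * (nW * (LG / 2 * n^2))"
        using usb rb nW0 g0 n0 by (intro mult_mono) (auto intro: mult_left_mono)
      finally show ?thesis .
    qed
    have t2: "\<bar>Dh \<bullet> (W *v us)\<bar> \<le> LG * n * n * (nW * (g * n))"
    proof -
      have "\<bar>Dh \<bullet> (W *v us)\<bar> \<le> norm Dh * (nW * norm us)" by (rule cs)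
      also have "\<dots> \<le> LG * n * n * (nW * (g * n))"
        using usb Dhb nW0 LG0 n0 by (intro mult_mono) (auto intro: mult_left_mono)
      finally show ?thesis .
    qed
    have t3: "\<bar>Dh \<bullet> (W *v r)\<bar> \<le> LG * n * n * (nW * (LG / 2 * n^2))"
    proof -
      have "\<bar>Dh \<bullet> (W *v r)\<bar> \<le> norm Dh * (nW * norm r)" by (rule cs)
      also have "\<dots> \<le> LG * n * n * (nW * (LG / 2 * n^2))"
        using rb Dhb nW0 LG0 n0 by (intro mult_mono) (auto intro: mult_left_mono)
      finally show ?thesis .
    qed
    have sumP: "g * n * (nW * (LG / 2 * n^2)) + LG * n * n * (nW * (g * n)) + LG * n * n * (nW * (LG / 2 * n^2))
       = (nW * LG * n * (3/2 * g + 1/2 * LG * n)) * n^2"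
      by (simp add: algebra_simps power2_eq_square)
    have mono1: "nW * LG * n * (3/2 * g + 1/2 * LG * n) \<le> nW * LG * r0 * (3/2 * g + 1/2 * LG * r0)"
    proof -
      have "3/2 * g + 1/2 * LG * n \<le> 3/2 * g + 1/2 * LG * r0" using nr0 LG0 by (simp add: mult_left_mono)
      moreover have "nW * LG * n \<le> nW * LG * r0" using nr0 LG0 nW0 by (simp add: mult_left_mono)
      ultimately show ?thesis using nW0 LG0 n0 g0 nr0 r0 by (intro mult_mono) auto
    qed
    have "lam / 2 * n^2 \<le> h \<bullet> Psi th"
    proof -
      have "(nW * LG * n * (3/2 * g + 1/2 * LG * n)) * n^2 \<le> lam / 2 * n^2"
        using mono1 ident unfolding nW_def g_def Gs_def by (intro mult_right_mono) auto
      thus ?thesis using hPsi expand lamq t1 t2 t3 sumP by linarith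
    qed
    also have "\<dots> \<le> n * norm (Psi th)" unfolding n_def by (rule Cauchy_Schwarz_ineq2[THEN order_trans[OF abs_ge_self]])
    finally have "(lam / 2 * n) * n \<le> norm (Psi th) * n" by (simp add: power2_eq_square algebra_simps)
    thus ?thesis using npos by simp
  qed
  define R where "R = (\<Sum>k=1..L. a k * (delta_mu k zeta + alpha * sqrt (C k)))"
  define S where "S k = (\<Sum>n=1..N. w_hat k th \<omega> n *\<^sub>R g_chk k n th \<omega>)" for k
  have diff: "Psi_SGR th \<omega> - Psi th = (\<Sum>k=1..L. a k *\<^sub>R (S k - mu_g k th))"
    using Psi_decomp thB unfolding Psi_SGR_def S_def
    by (simp add: sum_subtractf scaleR_diff_right)
  have "norm (Psi_SGR th \<omega> - Psi th) \<le> (\<Sum>k=1..L. norm (a k *\<^sub>R (S k - mu_g k th)))"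
    unfolding diff by (rule norm_sum)
  also have "\<dots> \<le> R" unfolding R_def
  proof (rule sum_mono)
    fix k assume k: "k \<in> {1..L}"
    have "norm (S k - mu_g k th) \<le> delta_mu k zeta + alpha * sqrt (C k)"
      using E_i w k thB unfolding S_def by blast
    thus "norm (a k *\<^sub>R (S k - mu_g k th)) \<le> a k * (delta_mu k zeta + alpha * sqrt (C k))"
      using a_nonneg k by (simp add: mult_left_mono)
  qed
  finally have d1: "norm (Psi_SGR th \<omega> - Psi th) \<le> R" .
  have d2: "norm (Psi_SGR th \<omega>) \<le> delta_opt" using E_ii w th_def by blast
  have "norm (Psi th) \<le> norm (Psi_SGR th \<omega>) + norm (Psi_SGR th \<omega> - Psi th)"
    using norm_triangle_ineq[of "Psi_SGR th \<omega>" "Psi th - Psi_SGR th \<omega>"] by (simp add: norm_minus_commute)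
  hence PB: "norm (Psi th) \<le> R + delta_opt" using d1 d2 by linarith
  have "n \<le> 2 / lam * norm (Psi th)" using key lam_pos by (simp add: field_simps)
  also have "\<dots> \<le> 2 / lam * (R + delta_opt)" using PB lam_pos by (intro mult_left_mono) auto
  finally show "norm (theta_hat \<omega> - theta_star)
     \<le> 2 / lam * ((\<Sum>k=1..L. a k * (delta_mu k zeta + alpha * sqrt (C k))) + delta_opt)"
    unfolding n_def h_def th_def R_def .
qed

end
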